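(* Let $n\ge 1$, let $c\in\mathbb{R}^n$ with $c_1\ge c_2\ge\cdots\ge c_n\ge 0$, and let $u\in\mathbb{R}^n$ with $u_i>0$ for all $i$. Consider the problem \[ \text{(P)}\qquad \min\ f(x)=\tfrac12\Big(\sum_{i=1}^n x_i\Big)^2-\sum_{i=1}^n c_ix_i\quad\text{subject to } 0\le x\le u . \] For $k=0,\dots,n$ let $U_k=\sum_{i=1}^k u_i$ ($U_0=0$) and let $x^{(k)}$ be the vector with $x^{(k)}_i=u_i$ for $i\le k$ and $x^{(k)}_i=0$ for $i>k$. For $k=1,\dots,n$ let $G_k=U_{k-1}+\frac12u_k-c_k$. Let $e_i$ be the $i$-th standard unit vector. (i) If $\bar n$, the smallest index in $\{1,\dots,n\}$ with $G_{\bar n}\ge0$, exists and satisfies $1<\bar n\le n$, let $\delta_1=\min\{c_{\bar n-1}-U_{\bar n-2},u_{\bar n-1}\}$, $\delta_2=\max\{c_{\bar n}-U_{\bar n-1},0\}$, $\bar x=x^{(\bar n-2)}+\delta_1e_{\bar n-1}$, $\tilde x=x^{(\bar n-1)}+\delta_2e_{\bar n}$. Then $\min\{f(\bar x),f(\tilde x)\}$ is the optimal value of (P). (ii) If $G_1\ge 0$ (i.e. $\bar n=1$), let $\tilde x=\min\{c_1,u_1\}\,e_1$. Then $f(\tilde x)$ is the optimal value of (P). (iii) If $G_k<0$ for all $k=1,\dots,n$, let $\delta'=\min\{c_n-U_{n-1},u_n\}$ and $\tilde x=x^{(n-1)}+\delta'e_n$. Then $\tilde x$ is an optimal solution of (P),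 i.e. $f(\tilde x)$ is its optimal value.
   Context: Inequalities between vectors are componentwise. *)

theory Defs
  imports Complex_Main
begin

(* Vectors in R^n are represented as functions nat => real; only the
   components 1..n are relevant. *)

definition obj :: "nat \<Rightarrow> (nat \<Rightarrow> real) \<Rightarrow> (nat \<Rightarrow> real) \<Rightarrow> real" where
  "obj n c x = (1/2) * (\<Sum>i=1..n. x i)^2 - (\<Sum>i=1..n. c i * x i)"

definition feasible :: "nat \<Rightarrow> (nat \<Rightarrow> real) \<Rightarrow> (nat \<Rightarrow> real) \<Rightarrow> bool" where
  "feasible n u x \<longleftrightarrow> (\<forall>i\<in>{1..n}. 0 \<le> x i \<and> x i \<le> u i)"

definition optimal_value :: "nat \<Rightarrow> (nat \<Rightarrow> real) \<Rightarrow> (nat \<Rightarrow> real) \<Rightarrow> real \<Rightarrow> bool" where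
  "optimal_value n c u v \<longleftrightarrow>
     (\<exists>x. feasible n u x \<and> obj n c x = v) \<and> (\<forall>x. feasible n u x \<longrightarrow> v \<le> obj n c x)"

definition optimal_solution :: "nat \<Rightarrow> (nat \<Rightarrow> real) \<Rightarrow> (nat \<Rightarrow> real) \<Rightarrow> (nat \<Rightarrow> real) \<Rightarrow> bool" where
  "optimal_solution n c u x \<longleftrightarrow> feasible n u x \<and> (\<forall>y. feasible n u y \<longrightarrow> obj n c x \<le> obj n c y)"

definition Usum :: "(nat \<Rightarrow> real) \<Rightarrow> nat \<Rightarrow> real" where
  "Usum u k = (\<Sum>i=1..k. u i)"

definition xk :: "(nat \<Rightarrow> real) \<Rightarrow> nat \<Rightarrow> nat \<Rightarrow> real" where
  "xk u k = (\<lambda>i. if i \<le> k then u i else 0)"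

definition Gk :: "(nat \<Rightarrow> real) \<Rightarrow> (nat \<Rightarrow> real) \<Rightarrow> nat \<Rightarrow> real" where
  "Gk c u k = Usum u (k - 1) + (1/2) * u k - c k"

definition unitv :: "nat \<Rightarrow> nat \<Rightarrow> real" where
  "unitv i = (\<lambda>j. if j = i then 1 else 0)"

end

theory Submission imports Defs begin

lemma obj_diff:
  "obj n c y - obj n c x = (\<Sum>i=1..n. ((\<Sum>j=1..n. x j) - c i) * (y i - x i))
     + (1/2) * ((\<Sum>i=1..n. y i) - (\<Sum>i=1..n. x i))^2"
proof -
  define S where "S = (\<Sum>j=1..n. x j)"
  define T where "T = (\<Sum>j=1..n. y j)"
  have "(\<Sum>i=1..n. (S - c i) * (y i - x i)) = (\<Sum>i=1..n. S * y i - S * x i - (c i * y i) + c i * x i)"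
    by (rule sum.cong) (auto simp: algebra_simps)
  also have "\<dots> = S * T - S * S - (\<Sum>i=1..n. c i * y i) + (\<Sum>i=1..n. c i * x i)"
    by (simp add: sum.distrib sum_subtractf sum_distrib_left S_def T_def)
  finally show ?thesis unfolding obj_def S_def[symmetric] T_def[symmetric]
    by (simp add: power2_eq_square algebra_simps)
qed

lemma opt_crit:
  assumes "feasible n u x"
    and "\<forall>i\<in>{1..n}. \<forall>t. 0 \<le> t \<and> t \<le> u i \<longrightarrow> 0 \<le> ((\<Sum>j=1..n. x j) - c i) * (t - x i)"
  shows "optimal_solution n c u x"
  unfolding optimal_solution_def
proof (intro conjI allI impI)
  fix y assume y: "feasible n u y"
  have "0 \<le> (\<Sum>i=1..n. ((\<Sum>j=1..n. x j) - c i) * (y i - x i))"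
    using assms(2) y unfolding feasible_def by (intro sum_nonneg) auto
  moreover have "0 \<le> (1/2::real) * ((\<Sum>i=1..n. y i) - (\<Sum>i=1..n. x i))^2" by simp
  ultimately show "obj n c x \<le> obj n c y" using obj_diff[of n c y x] by linarith
qed (use assms in auto)

lemma sol_val: "optimal_solution n c u x \<Longrightarrow> optimal_value n c u (obj n c x)"
  unfolding optimal_solution_def optimal_value_def by auto

lemma cand_sum:
  assumes "k < n" and "\<forall>i\<in>{1..n}. x i = (if i \<le> k then u i else if i = k+1 then d else 0)"
  shows "(\<Sum>i=1..n. x i) = Usum u k + d"
proof -
  have "(\<Sum>i=1..n. x i) = (\<Sum>i=1..n. (if i \<le> k then u i else 0) + (if i = k+1 then d else 0))"
    using assms by (intro sum.cong) auto
  also have "\<dots> = (\<Sum>i=1..n. (if i \<le> k then u i else 0)) + (\<Sum>i=1..n. (if i = k+1 then d else 0))"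
    by (simp add: sum.distrib)
  also have "(\<Sum>i=1..n. (if i \<le> k then u i else 0)) = sum u ({1..n} \<inter> {i. i \<le> k})"
    by (simp add: sum.inter_restrict)
  also have "{1..n} \<inter> {i. i \<le> k} = {1..k}" using assms(1) by auto
  also have "(\<Sum>i=1..n. (if i = k+1 then d else 0)) = d" using assms(1)
    by (simp add: sum.delta)
  finally show ?thesis by (simp add: Usum_def)
qed

lemma cand_opt:
  assumes kn: "k < n" and d: "0 \<le> d" "d \<le> u (k+1)"
    and x: "\<forall>i\<in>{1..n}. x i = (if i \<le> k then u i else if i = k+1 then d else 0)"
    and upos: "\<forall>i\<in>{1..n}. u i > 0"
    and lo: "\<forall>i\<in>{1..k}. Usum u k + d \<le> c i"
    and hi: "\<forall>i\<in>{k+2..n}. c i \<le> Usum u k + d"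
    and mid: "Usum u k + d = c (k+1) \<or> (d = 0 \<and> c (k+1) \<le> Usum u k + d)
              \<or> (d = u (k+1) \<and> Usum u k + d \<le> c (k+1))"
  shows "optimal_solution n c u x"
proof (rule opt_crit)
  show "feasible n u x" unfolding feasible_def using x d upos
    by (auto simp: less_imp_le)
  have S: "(\<Sum>j=1..n. x j) = Usum u k + d" using cand_sum[OF kn x] .
  show "\<forall>i\<in>{1..n}. \<forall>t. 0 \<le> t \<and> t \<le> u i \<longrightarrow> 0 \<le> ((\<Sum>j=1..n. x j) - c i) * (t - x i)"
  proof (intro ballI allI impI)
    fix i t assume i: "i \<in> {1..n}" and t: "0 \<le> t \<and> t \<le> u i"
    consider "i \<le> k" | "i = k+1" | "i \<ge> k+2" by linarith
    then show "0 \<le> ((\<Sum>j=1..n. x j) - c i) * (t - x i)"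
    proof cases
      case 1
      then have "Usum u k + d - c i \<le> 0" "t - x i \<le> 0" using lo i x t by auto
      then show ?thesis unfolding S by (simp add: mult_nonpos_nonpos)
    next
      case 2
      then have xi: "x i = d" using x i by auto
      from mid show ?thesis
      proof (elim disjE conjE)
        assume "Usum u k + d = c (k+1)" then show ?thesis using 2 S xi by simp
      next
        assume "d = 0" "c (k+1) \<le> Usum u k + d" then show ?thesis using 2 t S xi by simp
      next
        assume "d = u (k+1)" "Usum u k + d \<le> c (k+1)"
        then show ?thesis using 2 t S xi by (simp add: mult_nonpos_nonpos)
      qed
    next
      case 3
      then have "Usum u k + d - c i \<ge> 0" "t - x i \<ge> 0" using hi i x t by auto
      then show ?thesis unfolding S by simp
    qed
  qed
qed


lemma cand_feas:
  assumes "0 \<le> d" "d \<le> u (k+1)"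
    and x: "\<forall>i\<in>{1..n}. x i = (if i \<le> k then u i else if i = k+1 then d else 0)"
    and upos: "\<forall>i\<in>{1..n}. u i > 0"
  shows "feasible n u x"
  unfolding feasible_def using assms by (auto simp: less_imp_le)

lemma Usum_Suc: "Usum u (Suc k) = Usum u k + u (Suc k)"
  by (simp add: Usum_def)

lemma Usum_0: "Usum u 0 = 0"
  by (simp add: Usum_def)

lemma min_opt1:
  assumes "optimal_solution n c u x" "feasible n u y"
  shows "optimal_value n c u (min (obj n c x) (obj n c y))"
proof -
  have "min (obj n c x) (obj n c y) = obj n c x" using assms unfolding optimal_solution_def by auto
  then show ?thesis using sol_val[OF assms(1)] by simp
qed

lemma min_opt2:
  assumes "optimal_solution n c u y" "feasible n u x"
  shows "optimal_value n c u (min (obj n c x) (obj n c y))"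
  using min_opt1[OF assms] by (simp add: min.commute)

theorem theorem4:
  fixes n :: nat and c u :: "nat \<Rightarrow> real"
  assumes n: "n \<ge> 1"
    and c_mono: "\<forall>i j. 1 \<le> i \<and> i \<le> j \<and> j \<le> n \<longrightarrow> c j \<le> c i"
    and c_nonneg: "c n \<ge> 0"
    and u_pos: "\<forall>i\<in>{1..n}. u i > 0"
  shows
    "(\<forall>nb. 1 < nb \<and> nb \<le> n \<and> Gk c u nb \<ge> 0 \<and> (\<forall>k\<in>{1..<nb}. Gk c u k < 0) \<longrightarrow>
        (let \<delta>1 = min (c (nb - 1) - Usum u (nb - 2)) (u (nb - 1));
             \<delta>2 = max (c nb - Usum u (nb - 1)) 0;
             xbar = (\<lambda>i. xk u (nb - 2) i + \<delta>1 * unitv (nb - 1) i);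
             xtil = (\<lambda>i. xk u (nb - 1) i + \<delta>2 * unitv nb i)
         in optimal_value n c u (min (obj n c xbar) (obj n c xtil))))
     \<and> (Gk c u 1 \<ge> 0 \<longrightarrow>
        optimal_value n c u (obj n c (\<lambda>i. min (c 1) (u 1) * unitv 1 i)))
     \<and> ((\<forall>k\<in>{1..n}. Gk c u k < 0) \<longrightarrow>
        (let \<delta>' = min (c n - Usum u (n - 1)) (u n);
             xtil = (\<lambda>i. xk u (n - 1) i + \<delta>' * unitv n i)
         in optimal_solution n c u xtil \<and> optimal_value n c u (obj n c xtil)))"
  proof (intro conjI)
  have cm: "\<And>i j. 1 \<le> i \<Longrightarrow> i \<le> j \<Longrightarrow> j \<le> n \<Longrightarrow> c j \<le> c i" using c_mono by blast
  show "\<forall>nb. 1 < nb \<and> nb \<le> n \<and> Gk c u nb \<ge> 0 \<and> (\<forall>k\<in>{1..<nb}. Gk c u k < 0) \<longrightarrow>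
        (let \<delta>1 = min (c (nb - 1) - Usum u (nb - 2)) (u (nb - 1));
             \<delta>2 = max (c nb - Usum u (nb - 1)) 0;
             xbar = (\<lambda>i. xk u (nb - 2) i + \<delta>1 * unitv (nb - 1) i);
             xtil = (\<lambda>i. xk u (nb - 1) i + \<delta>2 * unitv nb i)
         in optimal_value n c u (min (obj n c xbar) (obj n c xtil)))"
  proof (intro allI impI)
    fix nb assume H: "1 < nb \<and> nb \<le> n \<and> Gk c u nb \<ge> 0 \<and> (\<forall>k\<in>{1..<nb}. Gk c u k < 0)"
    define k where "k = nb - 2"
    have k: "nb = k + 2" using H k_def by arith
    have e1: "nb - 1 = k + 1" "nb - 2 = k" using k by auto
    have kn: "k + 2 \<le> n" using H k by auto
    have "Gk c u (k+1) < 0" using H k by auto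
    then have G1: "Usum u k + u (k+1) / 2 < c (k+1)"
      by (simp add: Gk_def)
    have G2: "c (k+2) \<le> Usum u k + u (k+1) + u (k+2) / 2"
      using H k by (auto simp: Gk_def Usum_Suc)
    have up1: "u (k+1) > 0" and up2: "u (k+2) > 0" using u_pos kn by auto
    define d1 where "d1 = min (c (k+1) - Usum u k) (u (k+1))"
    define d2 where "d2 = max (c (k+2) - Usum u (k+1)) 0"
    define xbar where "xbar = (\<lambda>i. xk u k i + d1 * unitv (k+1) i)"
    define xtil where "xtil = (\<lambda>i. xk u (k+1) i + d2 * unitv (k+2) i)"
    have xb: "\<forall>i\<in>{1..n}. xbar i = (if i \<le> k then u i else if i = k+1 then d1 else 0)"
      by (auto simp: xbar_def xk_def unitv_def)
    have xt: "\<forall>i\<in>{1..n}. xtil i = (if i \<le> k+1 then u i else if i = k+1+1 then d2 else 0)"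
      by (auto simp: xtil_def xk_def unitv_def)
    have d1a: "0 \<le> d1" "d1 \<le> u (k+1)" using G1 up1 by (auto simp: d1_def)
    have d2a: "0 \<le> d2" "d2 \<le> u (k+1+1)" using G2 up2 by (auto simp: d2_def Usum_Suc)
    have fb: "feasible n u xbar" by (rule cand_feas[OF d1a xb u_pos])
    have ft: "feasible n u xtil" by (rule cand_feas[OF d2a xt u_pos])
    have "optimal_value n c u (min (obj n c xbar) (obj n c xtil))"
    proof (cases "c (k+1) \<le> Usum u (k+1)")
      case True
      then have dd: "d1 = c (k+1) - Usum u k" by (auto simp: d1_def Usum_Suc)
      have "optimal_solution n c u xbar"
      proof (rule cand_opt[OF _ d1a xb u_pos])
        show "k < n" using kn by simp
        show "\<forall>i\<in>{1..k}. Usum u k + d1 \<le> c i" using dd kn by (auto intro: cm)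
        show "\<forall>i\<in>{k+2..n}. c i \<le> Usum u k + d1" using dd kn by (auto intro: cm)
        show "Usum u k + d1 = c (k+1) \<or> (d1 = 0 \<and> c (k+1) \<le> Usum u k + d1)
              \<or> (d1 = u (k+1) \<and> Usum u k + d1 \<le> c (k+1))" using dd by simp
      qed
      then show ?thesis using min_opt1 ft by blast
    next
      case False
      have "optimal_solution n c u xtil"
      proof (rule cand_opt[OF _ d2a xt u_pos])
        show "k+1 < n" using kn by simp
        have c12: "c (k+2) \<le> c (k+1)" using kn by (auto intro: cm)
        show "\<forall>i\<in>{1..k+1}. Usum u (k+1) + d2 \<le> c i"
        proof
          fix i assume i: "i \<in> {1..k+1}"
          then have "c (k+1) \<le> c i" using kn by (auto intro: cm)
          then show "Usum u (k+1) + d2 \<le> c i" using False c12 by (auto simp: d2_def)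
        qed
        show "\<forall>i\<in>{k+1+2..n}. c i \<le> Usum u (k+1) + d2"
        proof
          fix i assume i: "i \<in> {k+1+2..n}"
          then have "c i \<le> c (k+2)" using kn by (auto intro: cm)
          then show "c i \<le> Usum u (k+1) + d2" by (auto simp: d2_def)
        qed
        show "Usum u (k+1) + d2 = c (k+1+1) \<or> (d2 = 0 \<and> c (k+1+1) \<le> Usum u (k+1) + d2)
              \<or> (d2 = u (k+1+1) \<and> Usum u (k+1) + d2 \<le> c (k+1+1))"
          by (auto simp: d2_def)
      qed
      then show ?thesis using min_opt2 fb by blast
    qed
    then show "let \<delta>1 = min (c (nb - 1) - Usum u (nb - 2)) (u (nb - 1));
             \<delta>2 = max (c nb - Usum u (nb - 1)) 0;
             xbar = (\<lambda>i. xk u (nb - 2) i + \<delta>1 * unitv (nb - 1) i);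
             xtil = (\<lambda>i. xk u (nb - 1) i + \<delta>2 * unitv nb i)
         in optimal_value n c u (min (obj n c xbar) (obj n c xtil))"
      unfolding Let_def e1 k xbar_def xtil_def d1_def d2_def by simp
  qed
  show "Gk c u 1 \<ge> 0 \<longrightarrow> optimal_value n c u (obj n c (\<lambda>i. min (c 1) (u 1) * unitv 1 i))"
  proof
    assume G: "Gk c u 1 \<ge> 0"
    have u1: "u 1 > 0" using u_pos n by auto
    have c1: "c 1 \<ge> 0" using cm[of 1 n] n c_nonneg by simp
    have c1u: "c 1 \<le> u 1" using G u1 by (simp add: Gk_def Usum_0)
    have mm: "min (c 1) (u 1) = c 1" using c1u by simp
    have "optimal_solution n c u (\<lambda>i. min (c 1) (u 1) * unitv 1 i)"
    proof (rule cand_opt[where k=0 and d="c 1"])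
      show "0 < n" using n by simp
    qed (use c1 c1u u_pos n in \<open>auto simp: mm unitv_def Usum_0 intro: cm\<close>)
    then show "optimal_value n c u (obj n c (\<lambda>i. min (c 1) (u 1) * unitv 1 i))" by (rule sol_val)
  qed
  show "(\<forall>k\<in>{1..n}. Gk c u k < 0) \<longrightarrow>
        (let \<delta>' = min (c n - Usum u (n - 1)) (u n);
             xtil = (\<lambda>i. xk u (n - 1) i + \<delta>' * unitv n i)
         in optimal_solution n c u xtil \<and> optimal_value n c u (obj n c xtil))"
  proof
    assume G: "\<forall>k\<in>{1..n}. Gk c u k < 0"
    define m where "m = n - 1"
    have m: "n = m + 1" using n m_def by arith
    have "Gk c u (m+1) < 0" using G m by auto
    then have Gn: "Usum u m + u (m+1) / 2 < c (m+1)" by (simp add: Gk_def)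
    have up: "u (m+1) > 0" using u_pos m by auto
    define d where "d = min (c (m+1) - Usum u m) (u (m+1))"
    have da: "0 \<le> d" "d \<le> u (m+1)" using Gn up by (auto simp: d_def)
    have xt: "\<forall>i\<in>{1..n}. xk u m i + d * unitv (m+1) i = (if i \<le> m then u i else if i = m+1 then d else 0)"
      by (auto simp: xk_def unitv_def)
    have "optimal_solution n c u (\<lambda>i. xk u m i + d * unitv (m+1) i)"
    proof (rule cand_opt[OF _ da _ u_pos])
      show "m < n" using m by simp
      show "\<forall>i\<in>{1..n}. xk u m i + d * unitv (m+1) i = (if i \<le> m then u i else if i = m+1 then d else 0)"
        by (rule xt)
      show "\<forall>i\<in>{1..m}. Usum u m + d \<le> c i"
      proof
        fix i assume "i \<in> {1..m}"
        then have "c (m+1) \<le> c i" using m by (auto intro: cm)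
        then show "Usum u m + d \<le> c i" by (auto simp: d_def)
      qed
      show "\<forall>i\<in>{m+2..n}. c i \<le> Usum u m + d" using m by auto
      show "Usum u m + d = c (m+1) \<or> (d = 0 \<and> c (m+1) \<le> Usum u m + d)
              \<or> (d = u (m+1) \<and> Usum u m + d \<le> c (m+1))" by (auto simp: d_def)
    qed
    then show "let \<delta>' = min (c n - Usum u (n - 1)) (u n);
             xtil = (\<lambda>i. xk u (n - 1) i + \<delta>' * unitv n i)
         in optimal_solution n c u xtil \<and> optimal_value n c u (obj n c xtil)"
      unfolding Let_def m d_def by (simp add: sol_val)
  qed
qed

end
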